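(* Let $k$ and $n$ be positive integers. Any two $n$-vertex graphs whose components are all cycles with at least $k+1$ vertices have identical $k$-decks.
   Context: The $k$-deck $\mathcal{D}_k(G)$ of a graph $G$ is the multiset of isomorphism classes of the induced subgraphs of $G$ on $k$ vertices. *)

theory Defs
  imports "HOL-Library.Multiset"
begin

type_synonym 'a graph = "'a set \<times> ('a \<times> 'a) set"

definition simple_graph :: "'a graph \<Rightarrow> bool" where
  "simple_graph G \<longleftrightarrow> finite (fst G) \<and> snd G \<subseteq> fst G \<times> fst G \<and> sym (snd G)
     \<and> (\<forall>x. (x, x) \<notin> snd G)"

definition graph_iso :: "'a graph \<Rightarrow> 'b graph \<Rightarrow> bool" where
  "graph_iso G H \<longleftrightarrow> (\<exists>f. bij_betw f (fst G) (fst H) \<and>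
     (\<forall>x\<in>fst G. \<forall>y\<in>fst G. (x, y) \<in> snd G \<longleftrightarrow> (f x, f y) \<in> snd H))"

definition induced :: "'a graph \<Rightarrow> 'a set \<Rightarrow> 'a graph" where
  "induced G S = (S, snd G \<inter> (S \<times> S))"

text \<open>Isomorphism class of a graph, represented as the set of all isomorphic graphs
  on natural-number vertices (every finite graph has such a copy).\<close>
definition iso_class :: "'a graph \<Rightarrow> nat graph set" where
  "iso_class G = {H. graph_iso H G}"

definition deck :: "nat \<Rightarrow> 'a graph \<Rightarrow> nat graph set multiset" where
  "deck k G = image_mset (\<lambda>S. iso_class (induced G S))
                (mset_set {S. S \<subseteq> fst G \<and> card S = k})"

definition cycle_graph :: "nat \<Rightarrow> nat graph" where
  "cycle_graph m = ({0..<m}, {(i, j). i < m \<and> j < m \<and> (j = (i + 1) mod m \<or> i = (j + 1) mod m)})"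

definition is_cycle :: "'a graph \<Rightarrow> bool" where
  "is_cycle G \<longleftrightarrow> card (fst G) \<ge> 3 \<and> graph_iso G (cycle_graph (card (fst G)))"

definition components :: "'a graph \<Rightarrow> 'a set set" where
  "components G = (\<lambda>x. {y \<in> fst G. (x, y) \<in> (snd G)\<^sup>*}) ` fst G"

definition all_components_long_cycles :: "nat \<Rightarrow> 'a graph \<Rightarrow> bool" where
  "all_components_long_cycles k G \<longleftrightarrow>
     (\<forall>C\<in>components G. is_cycle (induced G C) \<and> card C \<ge> k + 1)"

end

theory Submission
  imports Defs "HOL-Library.FuncSet"
begin


definition SV :: "nat list \<Rightarrow> (nat \<times> nat) set" where
  "SV ms = Sigma {..<length ms} (\<lambda>c. {..<ms!c})"

definition SE :: "nat list \<Rightarrow> ((nat \<times> nat) \<times> (nat \<times> nat)) set" where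
  "SE ms = {((c,i),(c',i')). c < length ms \<and> i < ms!c \<and> c' = c \<and> i' < ms!c \<and>
      (i' = Suc i mod ms!c \<or> i = Suc i' mod ms!c)}"

definition Std :: "nat list \<Rightarrow> (nat \<times> nat) graph" where
  "Std ms = (SV ms, SE ms)"

definition sh :: "nat list \<Rightarrow> nat \<times> nat \<Rightarrow> int \<Rightarrow> nat \<times> nat" where
  "sh ms v a = (fst v, nat ((int (snd v) + a) mod int (ms ! fst v)))"

lemma SV_iff: "(c,i) \<in> SV ms \<longleftrightarrow> c < length ms \<and> i < ms!c"
  by (auto simp: SV_def)

lemma sh_0: "v \<in> SV ms \<Longrightarrow> sh ms v 0 = v"
  by (cases v) (auto simp: sh_def SV_iff)

lemma sh_add: "v \<in> SV ms \<Longrightarrow> sh ms (sh ms v a) b = sh ms v (a + b)"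
proof (cases v)
  case (Pair c i)
  assume "v \<in> SV ms"
  then have M: "ms!c > 0" using Pair by (auto simp: SV_iff)
  have "nat ((int (nat ((int i + a) mod int (ms!c))) + b) mod int (ms!c))
        = nat ((int i + (a + b)) mod int (ms!c))"
  proof -
    have "int (nat ((int i + a) mod int (ms!c))) = (int i + a) mod int (ms!c)"
      using M by simp
    then show ?thesis by (simp add: mod_add_left_eq add.assoc)
  qed
  then show ?thesis using Pair by (simp add: sh_def)
qed

lemma sh_SV: "v \<in> SV ms \<Longrightarrow> sh ms v a \<in> SV ms"
proof (cases v)
  case (Pair c i)
  assume "v \<in> SV ms"
  then have M: "ms!c > 0" "c < length ms" using Pair by (auto simp: SV_iff)
  have "nat ((int i + a) mod int (ms!c)) < ms!c"
    using M by (simp add: nat_less_iff)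
  then show ?thesis using Pair M by (simp add: sh_def SV_iff)
qed

lemma sh_fst[simp]: "fst (sh ms v a) = fst v"
  by (simp add: sh_def)

lemma sh_eq_iff:
  assumes "v \<in> SV ms"
  shows "sh ms v a = sh ms v b \<longleftrightarrow> a mod int (ms ! fst v) = b mod int (ms ! fst v)"
proof (cases v)
  case (Pair c i)
  then have M: "ms!c > 0" using assms by (auto simp: SV_iff)
  have "sh ms v a = sh ms v b \<longleftrightarrow> nat ((int i + a) mod int (ms!c)) = nat ((int i + b) mod int (ms!c))"
    using Pair M by (auto simp: sh_def)
  also have "\<dots> \<longleftrightarrow> (int i + a) mod int (ms!c) = (int i + b) mod int (ms!c)"
    by (rule eq_nat_nat_iff) (use M in auto)
  also have "\<dots> \<longleftrightarrow> a mod int (ms!c) = b mod int (ms!c)"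
  proof
    assume h: "(int i + a) mod int (ms!c) = (int i + b) mod int (ms!c)"
    have "a mod int (ms!c) = ((int i + a) mod int (ms!c) - int i) mod int (ms!c)"
      by (simp add: mod_diff_left_eq)
    also have "\<dots> = ((int i + b) mod int (ms!c) - int i) mod int (ms!c)" using h by simp
    also have "\<dots> = b mod int (ms!c)" by (simp add: mod_diff_left_eq)
    finally show "a mod int (ms!c) = b mod int (ms!c)" .
  next
    assume h: "a mod int (ms!c) = b mod int (ms!c)"
    show "(int i + a) mod int (ms!c) = (int i + b) mod int (ms!c)"
      by (metis h mod_add_right_eq)
  qed
  finally show ?thesis using Pair by simp
qed

lemma SE_sh:
  assumes "(v, w) \<in> SE ms"
  shows "w = sh ms v 1 \<or> w = sh ms v (-1)"
proof -
  obtain c i i' where vw: "v = (c,i)" "w = (c,i')" and c: "c < length ms" "i < ms!c" "i' < ms!c"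
    and e: "i' = Suc i mod ms!c \<or> i = Suc i' mod ms!c"
    using assms by (auto simp: SE_def)
  define M where "M = ms!c"
  have M: "M > 0" using c M_def by auto
  from e show ?thesis
  proof
    assume "i' = Suc i mod ms!c"
    then have "int i' = (int i + 1) mod int M" using M M_def by (simp add: of_nat_mod, metis add.commute)
    then have "i' = nat ((int i + 1) mod int M)" by simp
    then show ?thesis using vw M_def by (simp add: sh_def)
  next
    assume h: "i = Suc i' mod ms!c"
    then have "int i = (int i' + 1) mod int M" using M M_def by (simp add: of_nat_mod, metis add.commute)
    then have "(int i - 1) mod int M = int i'"
      using c M_def by (metis add_diff_cancel_right' mod_diff_left_eq mod_pos_pos_trivial of_nat_0_le_iff of_nat_less_iff)
    then have "i' = nat ((int i + -1) mod int M)" by simp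
    then show ?thesis using vw M_def by (simp add: sh_def)
  qed
qed

lemma sh_SE:
  assumes "v \<in> SV ms" "d = 1 \<or> d = -1"
  shows "(v, sh ms v d) \<in> SE ms"
proof (cases v)
  case (Pair c i)
  define M where "M = ms!c"
  have c: "c < length ms" "i < M" using assms Pair M_def by (auto simp: SV_iff)
  have w: "sh ms v d \<in> SV ms" using sh_SV assms by blast
  define i' where "i' = nat ((int i + d) mod int M)"
  have sv: "sh ms v d = (c, i')" using Pair i'_def M_def by (simp add: sh_def)
  have i'M: "i' < M" using w sv M_def by (simp add: SV_iff)
  have ii': "int i' = (int i + d) mod int M" using c i'_def by simp
  from assms(2) have "i' = Suc i mod M \<or> i = Suc i' mod M"
  proof
    assume "d = 1"
    then have "int i' = int (Suc i mod M)" using ii' by (simp add: of_nat_mod, metis add.commute)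
    then show ?thesis by simp
  next
    assume "d = -1"
    then have "int i' = (int i - 1) mod int M" using ii' by simp
    then have "(int i' + 1) mod int M = int i mod int M"
      by (metis diff_add_cancel mod_add_left_eq)
    then have "int (Suc i' mod M) = int i" using c by (simp add: of_nat_mod, metis add.commute)
    then show ?thesis by simp
  qed
  then show ?thesis using sv Pair c i'M M_def by (auto simp: SE_def)
qed


definition homs :: "nat \<Rightarrow> (nat \<times> nat) set \<Rightarrow> 'a graph \<Rightarrow> (nat \<Rightarrow> 'a) set" where
  "homs j E X = {f \<in> {..<j} \<rightarrow>\<^sub>E fst X. \<forall>x<j. \<forall>y<j. (x,y) \<in> E \<longrightarrow> (f x, f y) \<in> snd X}"

definition RR :: "nat \<Rightarrow> (nat \<times> nat) set \<Rightarrow> (nat \<times> nat) set" where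
  "RR j E = {(x,y). x < j \<and> y < j \<and> ((x,y) \<in> E \<or> (y,x) \<in> E)}"

definition rt :: "nat \<Rightarrow> (nat \<times> nat) set \<Rightarrow> nat \<Rightarrow> nat" where
  "rt j E x = (LEAST r. (r,x) \<in> (RR j E)\<^sup>*)"

lemma RR_sym: "(x,y) \<in> (RR j E)\<^sup>* \<Longrightarrow> (y,x) \<in> (RR j E)\<^sup>*"
proof -
  have "sym (RR j E)" by (auto simp: sym_def RR_def)
  then have "sym ((RR j E)\<^sup>*)" by (rule sym_rtrancl)
  then show "(x,y) \<in> (RR j E)\<^sup>* \<Longrightarrow> (y,x) \<in> (RR j E)\<^sup>*" by (auto simp: sym_def)
qed

lemma rt_rel: "(rt j E x, x) \<in> (RR j E)\<^sup>*"
  unfolding rt_def by (rule LeastI[of _ x]) simp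

lemma rt_le: "rt j E x \<le> x"
  unfolding rt_def by (rule Least_le) simp

lemma rt_eq: "(x,y) \<in> (RR j E)\<^sup>* \<Longrightarrow> rt j E x = rt j E y"
proof -
  assume h: "(x,y) \<in> (RR j E)\<^sup>*"
  have "\<And>r. (r,x) \<in> (RR j E)\<^sup>* \<longleftrightarrow> (r,y) \<in> (RR j E)\<^sup>*"
    using h RR_sym by (meson rtrancl_trans)
  then show ?thesis unfolding rt_def by simp
qed

lemma rt_rt: "rt j E (rt j E x) = rt j E x"
  using rt_eq[OF rt_rel] by simp

lemma rt_lt: "x < j \<Longrightarrow> rt j E x < j"
  using rt_le le_less_trans by blast

lemma RR_rt: "x < j \<Longrightarrow> y < j \<Longrightarrow> (x,y) \<in> E \<Longrightarrow> rt j E x = rt j E y"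
  by (rule rt_eq) (auto simp: RR_def)

lemma homs_V: "f \<in> homs j E X \<Longrightarrow> x < j \<Longrightarrow> f x \<in> fst X"
  by (auto simp: homs_def)

lemma comp_fst:
  assumes f: "f \<in> homs j E (Std ms)" and "(r,y) \<in> (RR j E)\<^sup>*"
  shows "fst (f y) = fst (f r)"
  using assms(2)
proof (induction rule: rtrancl_induct)
  case base then show ?case by simp
next
  case (step y z)
  then have "y<j" "z<j" "(y,z) \<in> E \<or> (z,y) \<in> E" by (auto simp: RR_def)
  then have "(f y, f z) \<in> SE ms \<or> (f z, f y) \<in> SE ms" using f by (auto simp: homs_def Std_def)
  then have "fst (f z) = fst (f y)" by (auto simp: SE_def)
  then show ?case using step by simp
qed

definition islift :: "nat list \<Rightarrow> nat \<Rightarrow> (nat \<times> nat) set \<Rightarrow> (nat \<Rightarrow> nat \<times> nat) \<Rightarrow> (nat \<Rightarrow> int) \<Rightarrow> bool" where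
  "islift ms j E f g \<longleftrightarrow> (\<forall>x<j. g (rt j E x) = 0 \<and> f x = sh ms (f (rt j E x)) (g x)) \<and>
     (\<forall>x<j. \<forall>y<j. (x,y) \<in> E \<longrightarrow> \<bar>g y - g x\<bar> = 1)"

definition good :: "nat \<Rightarrow> nat list \<Rightarrow> bool" where
  "good k ms \<longleftrightarrow> (\<forall>c<length ms. 3 \<le> ms!c \<and> k < ms!c)"

lemma mod_step:
  fixes p q M :: int
  assumes "0 < p" "p < M" "0 < q" "q < M" "q = (p + 1) mod M"
  shows "q = p + 1"
proof (cases "p + 1 < M")
  case True then show ?thesis using assms by simp
next
  case False then have "p + 1 = M" using assms by simp
  then show ?thesis using assms by simp
qed

lemma mod_step':
  fixes p q M :: int
  assumes "0 < p" "p < M" "0 < q" "q < M" "q = (p - 1) mod M"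
  shows "q = p - 1"
proof (cases "0 < p - 1")
  case True then show ?thesis using assms by simp
next
  case False then have "p = 1" using assms by simp
  then show ?thesis using assms by simp
qed

lemma modcalc: "((a::int) + ((b - w) mod M - (a - w) mod M)) mod M = (a + ((b - w) - (a - w))) mod M"
  by (metis mod_add_right_eq mod_diff_eq)

lemma lift_exists:
  assumes gd: "good k ms" and jk: "j \<le> k" and f: "f \<in> homs j E (Std ms)"
  shows "\<exists>g. islift ms j E f g"
proof -
  define K where "K r = {y. y < j \<and> rt j E y = r}" for r
  define cc where "cc r = fst (f r)" for r
  define M where "M r = ms ! cc r" for r
  define w where "w r = (SOME i. i < M r \<and> (cc r, i) \<notin> f ` K r)" for r
  define pos where "pos r y = (int (snd (f y)) - int (w r)) mod int (M r)" for r y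
  define g where "g y = pos (rt j E y) y - pos (rt j E y) (rt j E y)" for y
  have fV: "f y \<in> SV ms" if "y < j" for y using f that by (auto simp: homs_def Std_def)
  have key: "rt j E y < j \<and> 3 \<le> M (rt j E y) \<and> fst (f y) = cc (rt j E y)
        \<and> snd (f y) < M (rt j E y) \<and> w (rt j E y) < M (rt j E y)
        \<and> (cc (rt j E y), w (rt j E y)) \<notin> f ` K (rt j E y)" if "y<j" for y
  proof -
    let ?r = "rt j E y"
    have r: "?r < j" using rt_lt that by blast
    have fr: "f ?r \<in> SV ms" using fV r .
    then have c: "cc ?r < length ms" by (cases "f ?r") (auto simp: cc_def SV_iff)
    then have M: "3 \<le> M ?r" "k < M ?r" using gd by (auto simp: good_def M_def)
    have fy: "fst (f y) = cc ?r" using comp_fst[OF f rt_rel] cc_def by simp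
    have sy: "snd (f y) < M ?r" using fV[OF that] fy by (cases "f y") (auto simp: SV_iff M_def)
    have "\<exists>i. i < M ?r \<and> (cc ?r, i) \<notin> f ` K ?r"
    proof (rule ccontr)
      assume nex: "\<not> ?thesis"
      have sub: "{..<M ?r} \<subseteq> (snd \<circ> f) ` K ?r"
      proof
        fix i assume "i \<in> {..<M ?r}"
        then have "(cc ?r, i) \<in> f ` K ?r" using nex by auto
        then show "i \<in> (snd \<circ> f) ` K ?r" by (metis (no_types, lifting) comp_apply image_iff snd_conv)
      qed
      have fin: "finite (K ?r)" by (auto simp: K_def)
      have "card {..<M ?r} \<le> card ((snd \<circ> f) ` K ?r)"
        by (rule card_mono[OF _ sub]) (use fin in auto)
      also have "\<dots> \<le> card (K ?r)" using fin by (rule card_image_le)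
      also have "\<dots> \<le> j" using card_mono[of "{..<j}" "K ?r"] by (auto simp: K_def)
      finally show False using M jk by simp
    qed
    then have "w ?r < M ?r \<and> (cc ?r, w ?r) \<notin> f ` K ?r" unfolding w_def by (rule someI_ex)
    then show ?thesis using r c M fy sy by auto
  qed
  have posb: "0 < pos (rt j E y) y \<and> pos (rt j E y) y < int (M (rt j E y))" if "y < j" for y
  proof -
    let ?r = "rt j E y"
    have k: "3 \<le> M ?r" "snd (f y) < M ?r" "w ?r < M ?r" "(cc ?r, w ?r) \<notin> f ` K ?r"
      "fst (f y) = cc ?r" using key[OF that] by auto
    have "y \<in> K ?r" using that by (simp add: K_def)
    then have ne: "snd (f y) \<noteq> w ?r" using k by (metis image_eqI prod.collapse)
    have "pos ?r y \<noteq> 0"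
    proof
      assume "pos ?r y = 0"
      then have "(int (snd (f y)) - int (w ?r)) mod int (M ?r) = 0" by (simp add: pos_def)
      then have "int (M ?r) dvd (int (snd (f y)) - int (w ?r))" by (simp add: mod_eq_0_iff_dvd)
      then obtain t where t: "int (snd (f y)) - int (w ?r) = int (M ?r) * t" by (auto simp: dvd_def)
      have "t = 0"
      proof (rule ccontr)
        assume "t \<noteq> 0"
        then have "\<bar>int (M ?r) * t\<bar> \<ge> int (M ?r)"
        proof -
          have "1 \<le> \<bar>t\<bar>" using \<open>t \<noteq> 0\<close> by linarith
          then show ?thesis using mult_left_mono[of 1 "\<bar>t\<bar>" "int (M ?r)"] by (simp add: abs_mult)
        qed
        then show False using t k by linarith
      qed
      then show False using t ne by simp
    qed
    moreover have "0 \<le> pos ?r y" "pos ?r y < int (M ?r)" using k by (auto simp: pos_def)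
    ultimately show ?thesis by auto
  qed
  have "islift ms j E f g"
    unfolding islift_def
  proof (intro conjI allI impI)
    fix x assume x: "x < j"
    show "g (rt j E x) = 0" by (simp add: g_def rt_rt)
    let ?r = "rt j E x"
    have k: "fst (f x) = cc ?r" "snd (f x) < M ?r" "?r < j" using key[OF x] by auto
    have kr: "fst (f ?r) = cc ?r" "snd (f ?r) < M ?r" using key[OF k(3)] by (auto simp: rt_rt)
    have e: "(int (snd (f ?r)) + (pos ?r x - pos ?r ?r)) mod int (M ?r) = int (snd (f x))"
    proof -
      have "(int (snd (f ?r)) + (pos ?r x - pos ?r ?r)) mod int (M ?r)
          = (int (snd (f ?r)) + ((int (snd (f x)) - int (w ?r)) - (int (snd (f ?r)) - int (w ?r)))) mod int (M ?r)"
        unfolding pos_def by (rule modcalc)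
      also have "\<dots> = int (snd (f x)) mod int (M ?r)" by simp
      also have "\<dots> = int (snd (f x))" using k by simp
      finally show ?thesis .
    qed
    show "f x = sh ms (f ?r) (g x)"
      using k kr e unfolding g_def sh_def M_def by (simp add: prod_eq_iff)
  next
    fix x y assume x: "x < j" and y: "y < j" and xy: "(x,y) \<in> E"
    have rr: "rt j E y = rt j E x" using RR_rt[OF x y xy] by simp
    let ?r = "rt j E x"
    have kx: "fst (f x) = cc ?r" "snd (f x) < M ?r" using key[OF x] by auto
    have ky: "fst (f y) = cc ?r" "snd (f y) < M ?r" using key[OF y] rr by auto
    have px: "0 < pos ?r x" "pos ?r x < int (M ?r)" using posb[OF x] by auto
    have py: "0 < pos ?r y" "pos ?r y < int (M ?r)" using posb[OF y] rr by auto
    have "(f x, f y) \<in> SE ms" using f x y xy by (auto simp: homs_def Std_def)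
    then have "snd (f y) = Suc (snd (f x)) mod M ?r \<or> snd (f x) = Suc (snd (f y)) mod M ?r"
      using kx ky by (cases "f x", cases "f y") (auto simp: SE_def M_def)
    then have "pos ?r y = pos ?r x + 1 \<or> pos ?r y = pos ?r x - 1"
    proof
      assume h: "snd (f y) = Suc (snd (f x)) mod M ?r"
      have "pos ?r y = (pos ?r x + 1) mod int (M ?r)"
        unfolding pos_def h by (simp add: mod_simps of_nat_mod algebra_simps)
      then show ?thesis using mod_step px py by blast
    next
      assume h: "snd (f x) = Suc (snd (f y)) mod M ?r"
      have "pos ?r x = (pos ?r y + 1) mod int (M ?r)"
        unfolding pos_def h by (simp add: mod_simps of_nat_mod algebra_simps)
      then show ?thesis using mod_step px py by force
    qed
    then show "\<bar>g y - g x\<bar> = 1" unfolding g_def rr by auto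
  qed
  then show ?thesis by blast
qed
lemma finite_homs: "finite (fst X) \<Longrightarrow> finite (homs j E X)"
proof -
  assume "finite (fst X)"
  then have "finite ({..<j} \<rightarrow>\<^sub>E fst X)" by (intro finite_PiE) auto
  then show ?thesis by (rule rev_finite_subset) (auto simp: homs_def)
qed


lemma lift_unique:
  assumes gd: "good k ms" and f: "f \<in> homs j E (Std ms)" and g: "islift ms j E f g"
    and g': "islift ms j E f g'" and x: "x < j"
  shows "g x = g' x"
proof -
  let ?r = "rt j E x"
  have r: "?r < j" using rt_lt x by blast
  have "(?r, x) \<in> (RR j E)\<^sup>*" by (rule rt_rel)
  then show ?thesis
  proof (induction rule: rtrancl_induct)
    case base
    have "g (rt j E ?r) = 0" "g' (rt j E ?r) = 0" using g g' r by (auto simp: islift_def)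
    then show ?case by (simp add: rt_rt)
  next
    case (step y z)
    have yz: "y < j" "z < j" "(y,z) \<in> E \<or> (z,y) \<in> E" using step(2) by (auto simp: RR_def)
    have ry: "rt j E y = ?r" using rt_eq[OF step(1)] by (simp add: rt_rt)
    have rz: "rt j E z = ?r" using rt_eq[OF rtrancl_into_rtrancl[OF step(1) step(2)]] by (simp add: rt_rt)
    have fr: "f ?r \<in> SV ms" using f r by (auto simp: homs_def Std_def)
    have fy: "f y \<in> SV ms" using f yz by (auto simp: homs_def Std_def)
    have gy: "f y = sh ms (f ?r) (g y)" "f y = sh ms (f ?r) (g' y)" using g g' yz ry by (auto simp: islift_def)
    have gz: "f z = sh ms (f ?r) (g z)" "f z = sh ms (f ?r) (g' z)" using g g' yz rz by (auto simp: islift_def)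
    have d: "\<bar>g z - g y\<bar> = 1" "\<bar>g' z - g' y\<bar> = 1"
      using g g' yz by (auto simp: islift_def abs_minus_commute)
    have e1: "f z = sh ms (f y) (g z - g y)"
    proof -
      have "sh ms (f y) (g z - g y) = sh ms (f ?r) (g y + (g z - g y))"
        by (subst gy(1)) (rule sh_add[OF fr])
      then show ?thesis using gz(1) by simp
    qed
    have e2: "f z = sh ms (f y) (g' z - g' y)"
    proof -
      have "sh ms (f y) (g' z - g' y) = sh ms (f ?r) (g' y + (g' z - g' y))"
        by (subst gy(2)) (rule sh_add[OF fr])
      then show ?thesis using gz(2) by simp
    qed
    have "(g z - g y) mod int (ms ! fst (f y)) = (g' z - g' y) mod int (ms ! fst (f y))"
      using e1 e2 sh_eq_iff[OF fy] by simp
    moreover have M: "3 \<le> ms ! fst (f y)" using gd fy by (cases "f y") (auto simp: good_def SV_iff)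
    ultimately have "g z - g y = g' z - g' y"
    proof -
      assume h: "(g z - g y) mod int (ms ! fst (f y)) = (g' z - g' y) mod int (ms ! fst (f y))"
      show ?thesis
      proof (rule ccontr)
        assume ne: "g z - g y \<noteq> g' z - g' y"
        then have "\<bar>(g z - g y) - (g' z - g' y)\<bar> = 2" using d by auto
        moreover have "int (ms ! fst (f y)) dvd (g z - g y) - (g' z - g' y)"
          using h by (simp add: mod_eq_dvd_iff)
        ultimately have "int (ms ! fst (f y)) dvd 2"
          by (metis dvd_abs_iff)
        then have "int (ms ! fst (f y)) \<le> 2" by (rule zdvd_imp_le) simp
        then show False using M by simp
      qed
    qed
    then show ?case using step(3) by simp
  qed
qed

definition glift :: "nat list \<Rightarrow> nat \<Rightarrow> (nat \<times> nat) set \<Rightarrow> (nat \<Rightarrow> nat \<times> nat) \<Rightarrow> nat \<Rightarrow> int" where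
  "glift ms j E f = (SOME g. islift ms j E f g)"

definition Phi :: "nat list \<Rightarrow> nat list \<Rightarrow> (nat \<times> nat \<Rightarrow> nat \<times> nat) \<Rightarrow> nat \<Rightarrow> (nat \<times> nat) set
    \<Rightarrow> (nat \<Rightarrow> nat \<times> nat) \<Rightarrow> nat \<Rightarrow> nat \<times> nat" where
  "Phi ms ms' \<beta> j E f = (\<lambda>x\<in>{..<j}. sh ms' (\<beta> (f (rt j E x))) (glift ms j E f x))"

lemma glift_lift:
  assumes "good k ms" "j \<le> k" "f \<in> homs j E (Std ms)"
  shows "islift ms j E f (glift ms j E f)"
  unfolding glift_def using lift_exists[OF assms] by (rule someI_ex)

lemma Phi_hom:
  assumes gd: "good k ms" "good k ms'" and jk: "j \<le> k" and \<beta>: "\<beta> ` SV ms \<subseteq> SV ms'"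
    and f: "f \<in> homs j E (Std ms)"
  shows "Phi ms ms' \<beta> j E f \<in> homs j E (Std ms') \<and> islift ms' j E (Phi ms ms' \<beta> j E f) (glift ms j E f)"
proof -
  let ?g = "glift ms j E f"
  let ?h = "Phi ms ms' \<beta> j E f"
  have g: "islift ms j E f ?g" by (rule glift_lift[OF gd(1) jk f])
  have b: "\<beta> (f (rt j E x)) \<in> SV ms'" if "x < j" for x
    using \<beta> f rt_lt[OF that] by (auto simp: homs_def Std_def)
  have hx: "?h x = sh ms' (\<beta> (f (rt j E x))) (?g x)" if "x < j" for x
    using that by (simp add: Phi_def)
  have hV: "?h x \<in> SV ms'" if "x < j" for x using hx[OF that] sh_SV[OF b[OF that]] by simp
  have hr: "?h (rt j E x) = \<beta> (f (rt j E x))" if "x < j" for x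
  proof -
    have "?h (rt j E x) = sh ms' (\<beta> (f (rt j E x))) (?g (rt j E x))"
      using hx[OF rt_lt[OF that]] by (simp add: rt_rt)
    also have "?g (rt j E x) = 0" using g that by (auto simp: islift_def)
    finally show ?thesis using sh_0[OF b[OF that]] by simp
  qed
  have edge: "(?h x, ?h y) \<in> SE ms'" if "x < j" "y < j" "(x,y) \<in> E" for x y
  proof -
    have ryx: "rt j E y = rt j E x" using RR_rt[OF that] by simp
    have d: "\<bar>?g y - ?g x\<bar> = 1" using g that by (auto simp: islift_def)
    have "?h y = sh ms' (?h x) (?g y - ?g x)"
      using hx[OF that(1)] hx[OF that(2)] ryx sh_add[OF b[OF that(1)]] by simp
    moreover have "?g y - ?g x = 1 \<or> ?g y - ?g x = -1" using d by auto
    ultimately show ?thesis using sh_SE[OF hV[OF that(1)]] by metis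
  qed
  have "?h \<in> homs j E (Std ms')"
    unfolding homs_def Std_def using hV edge by (auto simp: Phi_def)
  moreover have "islift ms' j E ?h ?g"
    unfolding islift_def using g hx hr edge by (auto simp: islift_def)
  ultimately show ?thesis by blast
qed

lemma Phi_inv:
  assumes gd: "good k ms" "good k ms'" and jk: "j \<le> k" and \<beta>: "bij_betw \<beta> (SV ms) (SV ms')"
    and f: "f \<in> homs j E (Std ms)"
  shows "Phi ms' ms (inv_into (SV ms) \<beta>) j E (Phi ms ms' \<beta> j E f) = f"
proof -
  let ?g = "glift ms j E f"
  let ?h = "Phi ms ms' \<beta> j E f"
  have b1: "\<beta> ` SV ms \<subseteq> SV ms'" using \<beta> by (auto simp: bij_betw_def)
  have H: "?h \<in> homs j E (Std ms')" "islift ms' j E ?h ?g" using Phi_hom[OF gd jk b1 f] by auto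
  have g2: "islift ms' j E ?h (glift ms' j E ?h)" by (rule glift_lift[OF gd(2) jk H(1)])
  have eqg: "glift ms' j E ?h x = ?g x" if "x < j" for x
    by (rule lift_unique[OF gd(2) H(1) g2 H(2) that])
  have g: "islift ms j E f ?g" by (rule glift_lift[OF gd(1) jk f])
  have fr: "f (rt j E x) \<in> SV ms" if "x < j" for x
    using f rt_lt[OF that] by (auto simp: homs_def Std_def)
  have hr: "?h (rt j E x) = \<beta> (f (rt j E x))" if "x < j" for x
  proof -
    have "?h (rt j E x) = sh ms' (\<beta> (f (rt j E x))) (?g (rt j E x))"
      using rt_lt[OF that] by (simp add: Phi_def rt_rt)
    also have "?g (rt j E x) = 0" using g that by (auto simp: islift_def)
    finally show ?thesis using sh_0 \<beta> fr[OF that] by (metis bij_betw_apply)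
  qed
  show ?thesis
  proof (rule ext)
    fix x
    show "Phi ms' ms (inv_into (SV ms) \<beta>) j E ?h x = f x"
    proof (cases "x < j")
      case True
      have "Phi ms' ms (inv_into (SV ms) \<beta>) j E ?h x
          = sh ms (inv_into (SV ms) \<beta> (?h (rt j E x))) (glift ms' j E ?h x)"
        using True by (simp add: Phi_def)
      also have "\<dots> = sh ms (f (rt j E x)) (?g x)"
        using hr[OF True] eqg[OF True] fr[OF True] \<beta> by (simp add: bij_betw_def)
      also have "\<dots> = f x" using g True by (auto simp: islift_def)
      finally show ?thesis .
    next
      case False
      then show ?thesis using f by (auto simp: Phi_def homs_def PiE_def extensional_def)
    qed
  qed
qed

lemma finite_SV: "finite (SV ms)"
  by (auto simp: SV_def)


lemma Std_card_le:
  assumes gd: "good k ms" "good k ms'" and jk: "j \<le> k" and cd: "card (SV ms) = card (SV ms')"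
  shows "card (homs j E (Std ms)) \<le> card (homs j E (Std ms'))"
proof -
  obtain \<beta> where \<beta>: "bij_betw \<beta> (SV ms) (SV ms')"
    using finite_same_card_bij[OF finite_SV finite_SV cd] by blast
  have b1: "\<beta> ` SV ms \<subseteq> SV ms'" using \<beta> by (auto simp: bij_betw_def)
  have inj: "inj_on (Phi ms ms' \<beta> j E) (homs j E (Std ms))"
    by (rule inj_on_inverseI[where g = "Phi ms' ms (inv_into (SV ms) \<beta>) j E"])
      (rule Phi_inv[OF gd jk \<beta>])
  have sub: "Phi ms ms' \<beta> j E ` homs j E (Std ms) \<subseteq> homs j E (Std ms')"
    using Phi_hom[OF gd jk b1] by blast
  show ?thesis
    by (rule card_inj_on_le[OF inj sub]) (rule finite_homs, simp add: Std_def finite_SV)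
qed


lemma graph_iso_refl: "graph_iso G G"
  unfolding graph_iso_def by (rule exI[of _ id]) auto

lemma graph_iso_sym: assumes "graph_iso G H" shows "graph_iso H G"
proof -
  obtain f where f: "bij_betw f (fst G) (fst H)"
    and e: "\<forall>x\<in>fst G. \<forall>y\<in>fst G. (x, y) \<in> snd G \<longleftrightarrow> (f x, f y) \<in> snd H"
    using assms by (auto simp: graph_iso_def)
  let ?g = "inv_into (fst G) f"
  have g: "bij_betw ?g (fst H) (fst G)" using f by (rule bij_betw_inv_into)
  have "\<forall>x\<in>fst H. \<forall>y\<in>fst H. (x, y) \<in> snd H \<longleftrightarrow> (?g x, ?g y) \<in> snd G"
  proof (intro ballI)
    fix x y assume x: "x \<in> fst H" and y: "y \<in> fst H"
    have gx: "?g x \<in> fst G" "f (?g x) = x" using g x f by (auto simp: bij_betw_def f_inv_into_f)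
    have gy: "?g y \<in> fst G" "f (?g y) = y" using g y f by (auto simp: bij_betw_def f_inv_into_f)
    show "(x, y) \<in> snd H \<longleftrightarrow> (?g x, ?g y) \<in> snd G" using e gx gy by metis
  qed
  then show ?thesis using g by (auto simp: graph_iso_def)
qed

lemma graph_iso_trans: assumes "graph_iso G H" "graph_iso H K" shows "graph_iso G K"
proof -
  obtain f where f: "bij_betw f (fst G) (fst H)"
    and e: "\<forall>x\<in>fst G. \<forall>y\<in>fst G. (x, y) \<in> snd G \<longleftrightarrow> (f x, f y) \<in> snd H"
    using assms by (auto simp: graph_iso_def)
  obtain g where g: "bij_betw g (fst H) (fst K)"
    and e2: "\<forall>x\<in>fst H. \<forall>y\<in>fst H. (x, y) \<in> snd H \<longleftrightarrow> (g x, g y) \<in> snd K"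
    using assms by (auto simp: graph_iso_def)
  have "bij_betw (g \<circ> f) (fst G) (fst K)" using f g by (rule bij_betw_trans)
  moreover have "\<forall>x\<in>fst G. \<forall>y\<in>fst G. (x, y) \<in> snd G \<longleftrightarrow> ((g \<circ> f) x, (g \<circ> f) y) \<in> snd K"
  proof (intro ballI)
    fix x y assume x: "x \<in> fst G" and y: "y \<in> fst G"
    have "f x \<in> fst H" "f y \<in> fst H" using f x y by (auto simp: bij_betw_def)
    then show "(x, y) \<in> snd G \<longleftrightarrow> ((g \<circ> f) x, (g \<circ> f) y) \<in> snd K" using e e2 x y by simp
  qed
  ultimately show ?thesis by (auto simp: graph_iso_def)
qed


lemma homs_iso_le:
  assumes "graph_iso G H" "finite (fst H)"
  shows "card (homs j E G) \<le> card (homs j E H)"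
proof -
  obtain f where f: "bij_betw f (fst G) (fst H)"
    and e: "\<forall>x\<in>fst G. \<forall>y\<in>fst G. (x, y) \<in> snd G \<longleftrightarrow> (f x, f y) \<in> snd H"
    using assms by (auto simp: graph_iso_def)
  let ?T = "\<lambda>h. \<lambda>x\<in>{..<j}. f (h x)"
  have inj: "inj_on ?T (homs j E G)"
  proof (rule inj_onI)
    fix h1 h2 assume h1: "h1 \<in> homs j E G" and h2: "h2 \<in> homs j E G" and eq: "?T h1 = ?T h2"
    show "h1 = h2"
    proof (rule ext)
      fix x show "h1 x = h2 x"
      proof (cases "x < j")
        case True
        then have "f (h1 x) = f (h2 x)" using eq by (metis lessThan_iff restrict_apply')
        moreover have "h1 x \<in> fst G" "h2 x \<in> fst G" using h1 h2 True by (auto simp: homs_def)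
        ultimately show ?thesis using f by (auto simp: bij_betw_def inj_on_def)
      next
        case False then show ?thesis using h1 h2 by (auto simp: homs_def PiE_def extensional_def)
      qed
    qed
  qed
  have sub: "?T ` homs j E G \<subseteq> homs j E H"
  proof
    fix h' assume "h' \<in> ?T ` homs j E G"
    then obtain h where h: "h \<in> homs j E G" and h': "h' = ?T h" by blast
    have hv: "h x \<in> fst G" if "x < j" for x using h that by (auto simp: homs_def)
    show "h' \<in> homs j E H"
      unfolding homs_def h' using hv f e h
      by (auto simp: bij_betw_def homs_def)
  qed
  show ?thesis by (rule card_inj_on_le[OF inj sub]) (rule finite_homs[OF assms(2)])
qed

lemma homs_iso_eq:
  assumes "graph_iso G H" "finite (fst H)" "finite (fst G)"
  shows "card (homs j E G) = card (homs j E H)"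
  by (rule antisym[OF homs_iso_le[OF assms(1,2)] homs_iso_le[OF graph_iso_sym[OF assms(1)] assms(3)]])

lemma normal_form:
  assumes sg: "simple_graph G" and lc: "all_components_long_cycles k G"
  shows "\<exists>ms. good k ms \<and> graph_iso G (Std ms)"
proof -
  define V where "V = fst G"
  define E where "E = snd G"
  define comp where "comp v = {y \<in> V. (v,y) \<in> E\<^sup>*}" for v
  have compdef: "components G = comp ` V" by (simp add: components_def comp_def V_def E_def)
  have finV: "finite V" and EV: "E \<subseteq> V \<times> V" and symE: "sym E"
    using sg by (auto simp: simple_graph_def V_def E_def)
  have symS: "sym (E\<^sup>*)" using symE by (rule sym_rtrancl)
  have c1: "v \<in> comp v" if "v \<in> V" for v using that by (simp add: comp_def)
  have c2: "comp u = comp v" if "u \<in> comp v" for u v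
  proof -
    have uv: "(v,u) \<in> E\<^sup>*" using that by (simp add: comp_def)
    then have vu: "(u,v) \<in> E\<^sup>*" using symS by (auto simp: sym_def)
    show ?thesis unfolding comp_def using uv vu by (meson rtrancl_trans)
  qed
  have c3: "u \<in> V \<and> w \<in> V \<and> comp u = comp w" if "(u,w) \<in> E" for u w
  proof -
    have uw: "u \<in> V" "w \<in> V" using that EV by auto
    then have "w \<in> comp u" using that by (auto simp: comp_def)
    then show ?thesis using c2 uw by metis
  qed
  have compV: "comp v \<subseteq> V" for v by (auto simp: comp_def)
  obtain cs where cs: "distinct cs" "set cs = components G"
    using finite_distinct_list[of "components G"] finV compdef by auto
  define ms where "ms = map card cs"
  have Ccyc: "is_cycle (induced G C) \<and> k + 1 \<le> card C" if "C \<in> components G" for C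
    using lc that by (auto simp: all_components_long_cycles_def)
  have Cfst: "fst (induced G C) = C" "snd (induced G C) = E \<inter> C \<times> C" for C
    by (auto simp: induced_def E_def)
  define P where "P C \<phi> \<longleftrightarrow> bij_betw \<phi> C {0..<card C} \<and>
      (\<forall>x\<in>C. \<forall>y\<in>C. (x,y) \<in> E \<inter> C \<times> C \<longleftrightarrow> (\<phi> x, \<phi> y) \<in> snd (cycle_graph (card C)))" for C \<phi>
  define \<phi> where "\<phi> C = (SOME \<phi>. P C \<phi>)" for C
  have phiP: "P C (\<phi> C)" if "C \<in> components G" for C
  proof -
    have "graph_iso (induced G C) (cycle_graph (card C))"
      using Ccyc[OF that] by (auto simp: is_cycle_def Cfst)
    then have "\<exists>\<phi>. P C \<phi>" unfolding graph_iso_def P_def Cfst by (simp add: cycle_graph_def)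
    then show ?thesis unfolding \<phi>_def by (rule someI_ex)
  qed
  define idx where "idx v = (SOME i. i < length cs \<and> cs!i = comp v)" for v
  have idx: "idx v < length cs \<and> cs ! idx v = comp v" if "v \<in> V" for v
  proof -
    have "comp v \<in> set cs" using cs that compdef by auto
    then have "\<exists>i. i < length cs \<and> cs!i = comp v" by (simp add: in_set_conv_nth)
    then show ?thesis unfolding idx_def by (rule someI_ex)
  qed
  have compin: "comp v \<in> components G" if "v \<in> V" for v using that compdef by auto
  define \<Psi> where "\<Psi> v = (idx v, \<phi> (comp v) v)" for v
  have gd: "good k ms"
  proof -
    have "3 \<le> ms!c \<and> k < ms!c" if "c < length ms" for c
    proof -
      have "cs!c \<in> components G" using that cs by (auto simp: ms_def)
      then show ?thesis using Ccyc[of "cs!c"] that by (auto simp: ms_def is_cycle_def Cfst)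
    qed
    then show ?thesis by (simp add: good_def)
  qed
  have inj: "inj_on \<Psi> V"
  proof (rule inj_onI)
    fix u v assume u: "u \<in> V" and v: "v \<in> V" and eq: "\<Psi> u = \<Psi> v"
    have "comp u = comp v" using eq idx[OF u] idx[OF v] by (auto simp: \<Psi>_def)
    moreover have "\<phi> (comp u) u = \<phi> (comp v) v" using eq by (simp add: \<Psi>_def)
    ultimately have "\<phi> (comp u) u = \<phi> (comp u) v" by simp
    moreover have "inj_on (\<phi> (comp u)) (comp u)" using phiP[OF compin[OF u]] by (simp add: P_def bij_betw_def)
    moreover have "u \<in> comp u" "v \<in> comp u" using c1 u v \<open>comp u = comp v\<close> by auto
    ultimately show "u = v" by (meson inj_onD)
  qed
  have img: "\<Psi> ` V = SV ms"
  proof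
    show "\<Psi> ` V \<subseteq> SV ms"
    proof
      fix p assume "p \<in> \<Psi> ` V"
      then obtain v where v: "v \<in> V" and p: "p = \<Psi> v" by blast
      have "\<phi> (comp v) v \<in> {0..<card (comp v)}"
        using phiP[OF compin[OF v]] c1[OF v] by (auto simp: P_def bij_betw_def)
      then show "p \<in> SV ms" using idx[OF v] p by (auto simp: \<Psi>_def SV_iff ms_def)
    qed
  next
    show "SV ms \<subseteq> \<Psi> ` V"
    proof
      fix p assume p: "p \<in> SV ms"
      obtain c i where ci: "p = (c,i)" by (cases p)
      have c0: "c < length ms" "i < ms!c" using p ci by (simp_all add: SV_iff)
      have c: "c < length cs" "i < card (cs!c)" using c0 by (simp_all add: ms_def)
      have C: "cs!c \<in> components G" using cs(2) c(1) nth_mem by metis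
      then obtain v0 where v0: "v0 \<in> V" "cs!c = comp v0" using compdef by auto
      have "i \<in> \<phi> (cs!c) ` (cs!c)" using phiP[OF C] c by (auto simp: P_def bij_betw_def)
      then obtain v where v: "v \<in> cs!c" "\<phi> (cs!c) v = i" by blast
      have vV: "v \<in> V" using v v0 compV by auto
      have cv: "comp v = cs!c" using c2 v v0 by auto
      have "idx v = c" using idx[OF vV] cv cs(1) c(1) nth_eq_iff_index_eq by metis
      then show "p \<in> \<Psi> ` V" using ci v cv vV by (auto simp: \<Psi>_def intro!: image_eqI[of _ _ v])
    qed
  qed
  have edges: "(u,v) \<in> E \<longleftrightarrow> (\<Psi> u, \<Psi> v) \<in> SE ms" if u: "u \<in> V" and v: "v \<in> V" for u v
  proof
    assume uv: "(u,v) \<in> E"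
    have cc: "comp u = comp v" using c3[OF uv] by simp
    let ?C = "comp u"
    have inC: "u \<in> ?C" "v \<in> ?C" using c1 u v cc by auto
    have "(\<phi> ?C u, \<phi> ?C v) \<in> snd (cycle_graph (card ?C))"
      using phiP[OF compin[OF u]] inC uv by (auto simp: P_def)
    moreover have "idx u = idx v" using cc by (simp add: idx_def)
    ultimately show "(\<Psi> u, \<Psi> v) \<in> SE ms"
      using idx[OF u] idx[OF v] cc by (auto simp: \<Psi>_def SE_def ms_def cycle_graph_def)
  next
    assume h: "(\<Psi> u, \<Psi> v) \<in> SE ms"
    have "idx u = idx v" using h by (auto simp: \<Psi>_def SE_def)
    then have cc: "comp u = comp v" using idx[OF u] idx[OF v] by metis
    let ?C = "comp u"
    have inC: "u \<in> ?C" "v \<in> ?C" using c1 u v cc by auto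
    have "(\<phi> ?C u, \<phi> ?C v) \<in> snd (cycle_graph (card ?C))"
      using h idx[OF u] cc by (auto simp: \<Psi>_def SE_def ms_def cycle_graph_def)
    then show "(u,v) \<in> E"
      using phiP[OF compin[OF u]] inC by (auto simp: P_def)
  qed
  have "graph_iso G (Std ms)"
    unfolding graph_iso_def using inj img edges
    by (auto simp: bij_betw_def Std_def V_def E_def intro!: exI[of _ \<Psi>])
  then show ?thesis using gd by blast
qed



definition injs :: "nat \<Rightarrow> (nat \<times> nat) set \<Rightarrow> 'a graph \<Rightarrow> (nat \<Rightarrow> 'a) set" where
  "injs j E X = {f \<in> homs j E X. inj_on f {..<j}}"

definition nrm :: "(nat \<Rightarrow> 'a) \<Rightarrow> nat \<Rightarrow> nat" where
  "nrm f x = card (f ` {..< (LEAST y. f y = f x)})"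

lemma mu_le:
  fixes f :: "nat \<Rightarrow> 'a"
  shows "(LEAST y. f y = f x) \<le> x"
  by (rule Least_le) simp

lemma mu_eq:
  fixes f :: "nat \<Rightarrow> 'a"
  shows "f (LEAST y. f y = f x) = f x"
  by (rule LeastI[of _ x]) simp

lemma mu_notin:
  fixes f :: "nat \<Rightarrow> 'a"
  shows "f x \<notin> f ` {..< (LEAST y. f y = f x)}"
proof
  assume "f x \<in> f ` {..<LEAST y. f y = f x}"
  then obtain y where "y < (LEAST y. f y = f x)" "f y = f x" by auto
  then show False using not_less_Least by blast
qed

lemma nrm_less:
  fixes f :: "nat \<Rightarrow> 'a"
  assumes "(LEAST z. f z = f x) < (LEAST z. f z = f y)"
  shows "nrm f x < nrm f y"
proof -
  let ?a = "LEAST z. f z = f x" and ?b = "LEAST z. f z = f y"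
  have "f ` {..<?a} \<subseteq> f ` {..<?b}" by (rule image_mono) (use assms in auto)
  moreover have "f x \<in> f ` {..<?b}"
  proof -
    have "?a \<in> {..<?b}" using assms by simp
    then have "f ?a \<in> f ` {..<?b}" by (rule imageI)
    then show ?thesis using mu_eq[of f x] by simp
  qed
  moreover have "f x \<notin> f ` {..<?a}" by (rule mu_notin)
  ultimately have "f ` {..<?a} \<subset> f ` {..<?b}" by (metis psubsetI)
  then show ?thesis unfolding nrm_def using psubset_card_mono[of "f ` {..<?b}" "f ` {..<?a}"] by simp
qed

lemma nrm_eq_iff: "nrm f x = nrm f y \<longleftrightarrow> f x = f y"
proof
  assume e: "f x = f y"
  show "nrm f x = nrm f y" unfolding nrm_def e ..
next
  assume e: "nrm f x = nrm f y"
  let ?a = "LEAST z. f z = f x" and ?b = "LEAST z. f z = f y"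
  have "?a = ?b"
  proof (rule ccontr)
    assume "?a \<noteq> ?b"
    then show False
    proof (rule linorder_neqE_nat)
      assume "?a < ?b" then have "nrm f x < nrm f y" by (rule nrm_less)
      then show False using e by simp
    next
      assume "?b < ?a" then have "nrm f y < nrm f x" by (rule nrm_less)
      then show False using e by simp
    qed
  qed
  then have "f ?a = f ?b" by (rule arg_cong)
  then show "f x = f y" by (simp only: mu_eq)
qed

lemma card_image_kernel:
  assumes "\<forall>a\<in>A. \<forall>b\<in>A. f a = f b \<longleftrightarrow> g a = g b"
  shows "card (f ` A) = card (g ` A)"
proof -
  define r where "r u = (SOME a. a \<in> A \<and> f a = u)" for u
  define \<psi> where "\<psi> u = g (r u)" for u
  have ra: "r (f a) \<in> A \<and> f (r (f a)) = f a" if "a \<in> A" for a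
    unfolding r_def by (rule someI_ex) (use that in blast)
  have pa: "\<psi> (f a) = g a" if "a \<in> A" for a using ra[OF that] assms that by (auto simp: \<psi>_def)
  have "\<psi> ` f ` A = g ` A" using pa by (auto simp: image_iff)
  moreover have "inj_on \<psi> (f ` A)"
  proof (rule inj_onI)
    fix u v assume "u \<in> f ` A" "v \<in> f ` A" "\<psi> u = \<psi> v"
    then obtain a b where "a \<in> A" "b \<in> A" "u = f a" "v = f b" "g a = g b" using pa by auto
    then show "u = v" using assms by auto
  qed
  ultimately show ?thesis by (metis card_image)
qed

lemma nrm_kernel:
  assumes k: "\<forall>x<j. \<forall>y<j. f x = f y \<longleftrightarrow> g x = g y" and x: "x < j"
  shows "nrm f x = nrm g x"
proof -
  let ?a = "LEAST z. f z = f x" and ?b = "LEAST z. g z = g x"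
  have a: "?a \<le> x" "f ?a = f x" by (rule mu_le, rule mu_eq)
  have b: "?b \<le> x" "g ?b = g x" by (rule mu_le, rule mu_eq)
  have "g ?a = g x" using a k x by auto
  then have "?b \<le> ?a" by (rule Least_le)
  moreover have "f ?b = f x" using b k x by auto
  then have "?a \<le> ?b" by (rule Least_le)
  ultimately have ab: "?a = ?b" by simp
  have "card (f ` {..<?a}) = card (g ` {..<?a})"
    by (rule card_image_kernel) (use k a x in auto)
  then show ?thesis unfolding nrm_def ab by simp
qed

lemma nrm_lt: assumes "x < j" shows "nrm f x < card (f ` {..<j})"
proof -
  let ?a = "LEAST z. f z = f x"
  have "f ` {..<?a} \<subset> f ` {..<j}"
    using mu_le[of f x] mu_notin[of f x] assms by auto
  then show ?thesis unfolding nrm_def using psubset_card_mono[of "f ` {..<j}"] by simp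
qed

lemma nrm_image: "nrm f ` {..<j} = {..<card (f ` {..<j})}"
proof (rule card_subset_eq)
  show "nrm f ` {..<j} \<subseteq> {..<card (f ` {..<j})}" using nrm_lt by auto
  show "card (nrm f ` {..<j}) = card {..<card (f ` {..<j})}"
    using card_image_kernel[of "{..<j}" "nrm f" f] nrm_eq_iff by auto
qed simp

definition RG :: "nat \<Rightarrow> (nat \<Rightarrow> nat) set" where
  "RG j = {q \<in> {..<j} \<rightarrow>\<^sub>E UNIV. \<forall>x<j. nrm q x = q x}"

definition nq :: "nat \<Rightarrow> (nat \<Rightarrow> nat) \<Rightarrow> nat" where
  "nq j q = card (q ` {..<j})"

definition Eq :: "nat \<Rightarrow> (nat \<Rightarrow> nat) \<Rightarrow> (nat \<times> nat) set \<Rightarrow> (nat \<times> nat) set" where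
  "Eq j q E = {(q x, q y) | x y. x < j \<and> y < j \<and> (x,y) \<in> E}"

definition cmp :: "nat \<Rightarrow> (nat \<Rightarrow> nat) \<Rightarrow> (nat \<Rightarrow> 'a) \<Rightarrow> nat \<Rightarrow> 'a" where
  "cmp j q f' = (\<lambda>x\<in>{..<j}. f' (q x))"

lemma q_range: assumes "q \<in> RG j" shows "q ` {..<j} = {..<nq j q}"
proof -
  have "q ` {..<j} = nrm q ` {..<j}" using assms by (auto simp: RG_def image_def)
  also have "\<dots> = {..<nq j q}" by (simp add: nrm_image nq_def)
  finally show ?thesis .
qed

lemma finite_RG: "finite (RG j)"
proof -
  have "RG j \<subseteq> {..<j} \<rightarrow>\<^sub>E {..<j}"
  proof
    fix q assume q: "q \<in> RG j"
    have "q x < j" if "x < j" for x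
    proof -
      have "q x = nrm q x" using q that by (auto simp: RG_def)
      also have "\<dots> < card (q ` {..<j})" by (rule nrm_lt[OF that])
      also have "\<dots> \<le> j" using card_image_le[of "{..<j}" q] by simp
      finally show ?thesis .
    qed
    then show "q \<in> {..<j} \<rightarrow>\<^sub>E {..<j}" using q by (auto simp: RG_def)
  qed
  then show ?thesis by (rule finite_subset) (intro finite_PiE, auto)
qed

lemma nrm_cmp:
  assumes q: "q \<in> RG j" and f': "f' \<in> injs (nq j q) (Eq j q E) X" and x: "x < j"
  shows "nrm (cmp j q f') x = q x"
proof -
  have qr: "q y < nq j q" if "y < j" for y using q_range[OF q] that by auto
  have ij: "inj_on f' {..<nq j q}" using f' by (simp add: injs_def)
  have "\<forall>y<j. \<forall>z<j. cmp j q f' y = cmp j q f' z \<longleftrightarrow> q y = q z"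
    using qr ij by (auto simp: cmp_def inj_on_def)
  then have "nrm (cmp j q f') x = nrm q x" using nrm_kernel x by blast
  also have "\<dots> = q x" using q x by (simp add: RG_def)
  finally show ?thesis .
qed

lemma homs_decomp:
  "homs j E X = (\<Union>q\<in>RG j. cmp j q ` injs (nq j q) (Eq j q E) X)"
proof
  show "(\<Union>q\<in>RG j. cmp j q ` injs (nq j q) (Eq j q E) X) \<subseteq> homs j E X"
  proof (clarify)
    fix q f' assume q: "q \<in> RG j" and f': "f' \<in> injs (nq j q) (Eq j q E) X"
    have qr: "q y < nq j q" if "y < j" for y using q_range[OF q] that by auto
    have fv: "f' i \<in> fst X" if "i < nq j q" for i using f' that by (auto simp: injs_def homs_def)
    have fe: "(f' a, f' b) \<in> snd X" if "a < nq j q" "b < nq j q" "(a,b) \<in> Eq j q E" for a b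
      using f' that by (auto simp: injs_def homs_def)
    show "cmp j q f' \<in> homs j E X"
      unfolding homs_def cmp_def
    proof (intro CollectI conjI allI impI)
      show "(\<lambda>x\<in>{..<j}. f' (q x)) \<in> {..<j} \<rightarrow>\<^sub>E fst X" using fv qr by auto
    next
      fix x y assume "x < j" "y < j" "(x,y) \<in> E"
      then show "((\<lambda>x\<in>{..<j}. f' (q x)) x, (\<lambda>x\<in>{..<j}. f' (q x)) y) \<in> snd X"
        using fe qr by (auto simp: Eq_def)
    qed
  qed
next
  show "homs j E X \<subseteq> (\<Union>q\<in>RG j. cmp j q ` injs (nq j q) (Eq j q E) X)"
  proof
    fix f assume f: "f \<in> homs j E X"
    define q where "q = (\<lambda>x\<in>{..<j}. nrm f x)"
    define c where "c = card (f ` {..<j})"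
    define f' where "f' = (\<lambda>i\<in>{..<c}. f (SOME x. x < j \<and> nrm f x = i))"
    have qk: "\<forall>x<j. \<forall>y<j. q x = q y \<longleftrightarrow> f x = f y" using nrm_eq_iff by (auto simp: q_def)
    have qRG: "q \<in> RG j"
    proof -
      have "nrm q x = q x" if "x < j" for x
      proof -
        have "nrm q x = nrm f x" using nrm_kernel[OF qk that] .
        then show ?thesis using that by (simp add: q_def)
      qed
      then show ?thesis by (auto simp: RG_def q_def)
    qed
    have qimg: "q ` {..<j} = {..<c}" unfolding c_def using nrm_image[of f j] by (auto simp: q_def image_def)
    have nqc: "nq j q = c" using qimg by (simp add: nq_def)
    have sx: "f (SOME y. y < j \<and> nrm f y = nrm f x) = f x" if "x < j" for x
    proof -
      have "(SOME y. y < j \<and> nrm f y = nrm f x) < j \<and> nrm f (SOME y. y < j \<and> nrm f y = nrm f x) = nrm f x"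
        by (rule someI_ex) (use that in blast)
      then show ?thesis using nrm_eq_iff by blast
    qed
    have f'q: "f' (q x) = f x" if "x < j" for x
    proof -
      have "q x < c" using qimg that by auto
      then show ?thesis using sx[OF that] that by (simp add: f'_def q_def)
    qed
    have eqf: "cmp j q f' = f"
    proof (rule ext)
      fix x show "cmp j q f' x = f x"
        using f'q f by (cases "x < j") (auto simp: cmp_def homs_def PiE_def extensional_def)
    qed
    have ic: "\<exists>x<j. i = q x" if "i < c" for i using qimg that by auto
    have f'in: "f' \<in> injs c (Eq j q E) X"
      unfolding injs_def homs_def
    proof (intro CollectI conjI allI impI)
      show "f' \<in> {..<c} \<rightarrow>\<^sub>E fst X"
      proof
        fix i assume "i \<in> {..<c}"
        then obtain x where "x < j" "i = q x" using ic by auto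
        then show "f' i \<in> fst X" using f'q f by (auto simp: homs_def)
      qed (simp add: f'_def)
    next
      fix a b assume "a < c" "b < c" "(a,b) \<in> Eq j q E"
      then obtain x y where "x < j" "y < j" "(x,y) \<in> E" "a = q x" "b = q y" by (auto simp: Eq_def)
      then show "(f' a, f' b) \<in> snd X" using f'q f by (auto simp: homs_def)
    next
      show "inj_on f' {..<c}"
      proof (rule inj_onI)
        fix a b assume ab: "a \<in> {..<c}" "b \<in> {..<c}" "f' a = f' b"
        obtain x where x: "x < j" "a = q x" using ic ab(1) by auto
        obtain y where y: "y < j" "b = q y" using ic ab(2) by auto
        have "f x = f y" using f'q x y ab(3) by simp
        then show "a = b" using qk x y by auto
      qed
    qed
    show "f \<in> (\<Union>q\<in>RG j. cmp j q ` injs (nq j q) (Eq j q E) X)"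
      using qRG f'in eqf nqc by blast
  qed
qed

lemma homs_card_decomp:
  assumes fin: "finite (fst X)"
  shows "card (homs j E X) = (\<Sum>q\<in>RG j. card (injs (nq j q) (Eq j q E) X))"
proof -
  have fi: "finite (injs n E' X)" for n E' using finite_homs[OF fin] by (rule rev_finite_subset) (auto simp: injs_def)
  have inj: "inj_on (cmp j q) (injs (nq j q) (Eq j q E) X)" if q: "q \<in> RG j" for q
  proof (rule inj_onI)
    fix f1 f2 assume f1: "f1 \<in> injs (nq j q) (Eq j q E) X" and f2: "f2 \<in> injs (nq j q) (Eq j q E) X"
      and e: "cmp j q f1 = cmp j q f2"
    show "f1 = f2"
    proof (rule ext)
      fix i show "f1 i = f2 i"
      proof (cases "i < nq j q")
        case True
        then obtain x where "x < j" "i = q x" using q_range[OF q] by (metis imageE lessThan_iff)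
        then show ?thesis using e by (metis cmp_def lessThan_iff restrict_apply')
      next
        case False then show ?thesis using f1 f2 by (auto simp: injs_def homs_def PiE_def extensional_def)
      qed
    qed
  qed
  have disj: "cmp j q1 ` injs (nq j q1) (Eq j q1 E) X \<inter> cmp j q2 ` injs (nq j q2) (Eq j q2 E) X = {}"
    if "q1 \<in> RG j" "q2 \<in> RG j" "q1 \<noteq> q2" for q1 q2
  proof (rule ccontr)
    assume "\<not> ?thesis"
    then obtain f1 f2 where f1: "f1 \<in> injs (nq j q1) (Eq j q1 E) X" and f2: "f2 \<in> injs (nq j q2) (Eq j q2 E) X"
      and e: "cmp j q1 f1 = cmp j q2 f2" by blast
    have "q1 = q2"
    proof (rule ext)
      fix x show "q1 x = q2 x"
      proof (cases "x < j")
        case True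
        then show ?thesis using nrm_cmp[OF that(1) f1 True] nrm_cmp[OF that(2) f2 True] e by simp
      next
        case False then show ?thesis using that by (auto simp: RG_def PiE_def extensional_def)
      qed
    qed
    then show False using that by simp
  qed
  have "card (homs j E X) = card (\<Union>q\<in>RG j. cmp j q ` injs (nq j q) (Eq j q E) X)"
    by (simp add: homs_decomp[symmetric])
  also have "\<dots> = (\<Sum>q\<in>RG j. card (cmp j q ` injs (nq j q) (Eq j q E) X))"
    by (rule card_UN_disjoint) (use finite_RG fi disj in auto)
  also have "\<dots> = (\<Sum>q\<in>RG j. card (injs (nq j q) (Eq j q E) X))"
    by (rule sum.cong) (auto intro: card_image inj)
  finally show ?thesis .
qed


definition q0 :: "nat \<Rightarrow> nat \<Rightarrow> nat" where "q0 j = (\<lambda>x\<in>{..<j}. x)"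

lemma q0_RG: "q0 j \<in> RG j"
proof -
  have "nrm (q0 j) x = x" if x: "x < j" for x
  proof -
    have L: "(LEAST y. q0 j y = q0 j x) = x"
    proof (rule Least_equality)
      show "q0 j x = q0 j x" ..
      fix y assume "q0 j y = q0 j x"
      then show "x \<le> y" using x by (cases "y < j") (auto simp: q0_def)
    qed
    have "q0 j ` {..<x} = {..<x}" using x by (auto simp: q0_def image_def)
    then show ?thesis unfolding nrm_def L by simp
  qed
  then show ?thesis by (auto simp: RG_def q0_def)
qed

lemma nq_q0: "nq j (q0 j) = j"
proof -
  have "q0 j ` {..<j} = {..<j}" by (auto simp: q0_def image_def)
  then show ?thesis by (simp add: nq_def)
qed

lemma Eq_q0: "Eq j (q0 j) E = E \<inter> ({..<j} \<times> {..<j})"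
  by (auto simp: Eq_def q0_def)

lemma homs_restr: "homs j (E \<inter> ({..<j} \<times> {..<j})) X = homs j E X"
  by (auto simp: homs_def)

lemma injs_restr: "injs j (E \<inter> ({..<j} \<times> {..<j})) X = injs j E X"
  by (simp add: injs_def homs_restr)

lemma RG_small:
  assumes q: "q \<in> RG j" and ne: "q \<noteq> q0 j"
  shows "nq j q < j"
proof -
  have le: "nq j q \<le> j" using card_image_le[of "{..<j}" q] by (simp add: nq_def)
  have "nq j q \<noteq> j"
  proof
    assume e: "nq j q = j"
    then have ij: "inj_on q {..<j}" by (intro eq_card_imp_inj_on) (auto simp: nq_def)
    have "q x = x" if x: "x < j" for x
    proof -
      have L: "(LEAST y. q y = q x) = x"
      proof (rule Least_equality)
        show "q x = q x" ..
        fix y assume y: "q y = q x"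
        show "x \<le> y"
        proof (rule ccontr)
          assume "\<not> x \<le> y"
          then have "y < j" "y \<noteq> x" using x by auto
          then show False using ij x y by (auto simp: inj_on_def)
        qed
      qed
      have "card (q ` {..<x}) = x"
        using card_image[OF inj_on_subset[OF ij, of "{..<x}"]] x by auto
      then have "nrm q x = x" unfolding nrm_def L by simp
      then show ?thesis using q x by (simp add: RG_def)
    qed
    then have "q = q0 j" using q by (auto simp: q0_def RG_def PiE_def extensional_def fun_eq_iff)
    then show False using ne by simp
  qed
  then show ?thesis using le by simp
qed

lemma homs_split:
  assumes "finite (fst X)"
  shows "card (homs j E X) = card (injs j E X) + (\<Sum>q\<in>RG j - {q0 j}. card (injs (nq j q) (Eq j q E) X))"
proof -
  have "card (homs j E X) = (\<Sum>q\<in>RG j. card (injs (nq j q) (Eq j q E) X))"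
    by (rule homs_card_decomp[OF assms])
  also have "\<dots> = card (injs (nq j (q0 j)) (Eq j (q0 j) E) X) + (\<Sum>q\<in>RG j - {q0 j}. card (injs (nq j q) (Eq j q E) X))"
    by (rule sum.remove[OF finite_RG q0_RG])
  finally show ?thesis by (simp add: nq_q0 Eq_q0 injs_restr)
qed

lemma injs_eq:
  assumes finG: "finite (fst G)" and finH: "finite (fst H)"
    and hom: "\<forall>j\<le>k. \<forall>E. card (homs j E G) = card (homs j E H)"
  shows "j \<le> k \<Longrightarrow> card (injs j E G) = card (injs j E H)"
proof (induction j arbitrary: E rule: less_induct)
  case (less j)
  have "(\<Sum>q\<in>RG j - {q0 j}. card (injs (nq j q) (Eq j q E) G))
      = (\<Sum>q\<in>RG j - {q0 j}. card (injs (nq j q) (Eq j q E) H))"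
  proof (rule sum.cong)
    fix q assume "q \<in> RG j - {q0 j}"
    then have "nq j q < j" using RG_small by blast
    then show "card (injs (nq j q) (Eq j q E) G) = card (injs (nq j q) (Eq j q E) H)"
      using less by auto
  qed simp
  moreover have "card (homs j E G) = card (homs j E H)" using hom less.prems by auto
  ultimately show ?case using homs_split[OF finG, of j E] homs_split[OF finH, of j E] by simp
qed

definition inds :: "nat \<Rightarrow> (nat \<times> nat) set \<Rightarrow> 'a graph \<Rightarrow> (nat \<Rightarrow> 'a) set" where
  "inds j E X = {f \<in> {..<j} \<rightarrow>\<^sub>E fst X. inj_on f {..<j} \<and>
     (\<forall>x<j. \<forall>y<j. (x,y) \<in> E \<longleftrightarrow> (f x, f y) \<in> snd X)}"

definition sups :: "nat \<Rightarrow> (nat \<times> nat) set \<Rightarrow> (nat \<times> nat) set set" where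
  "sups j E = {E'. E \<subseteq> E' \<and> E' \<subseteq> {..<j} \<times> {..<j}}"

lemma finite_sups: "finite (sups j E)"
  by (rule finite_subset[of _ "Pow ({..<j} \<times> {..<j})"]) (auto simp: sups_def)

lemma injs_decomp:
  assumes "E \<subseteq> {..<j} \<times> {..<j}"
  shows "injs j E X = (\<Union>E'\<in>sups j E. inds j E' X)"
proof
  show "injs j E X \<subseteq> (\<Union>E'\<in>sups j E. inds j E' X)"
  proof
    fix f assume f: "f \<in> injs j E X"
    define E' where "E' = {(x,y). x < j \<and> y < j \<and> (f x, f y) \<in> snd X}"
    have "E' \<in> sups j E" using f assms by (auto simp: sups_def E'_def injs_def homs_def)
    moreover have "f \<in> inds j E' X" using f by (auto simp: inds_def E'_def injs_def homs_def)
    ultimately show "f \<in> (\<Union>E'\<in>sups j E. inds j E' X)" by blast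
  qed
next
  show "(\<Union>E'\<in>sups j E. inds j E' X) \<subseteq> injs j E X"
    by (auto simp: sups_def inds_def injs_def homs_def)
qed

lemma inds_disj:
  assumes "E1 \<in> sups j E" "E2 \<in> sups j E" "E1 \<noteq> E2"
  shows "inds j E1 X \<inter> inds j E2 X = {}"
proof (rule ccontr)
  assume "\<not> ?thesis"
  then obtain f where f: "f \<in> inds j E1 X" "f \<in> inds j E2 X" by blast
  have "E1 = E2"
  proof
    show "E1 \<subseteq> E2" using assms f by (auto simp: sups_def inds_def)
    show "E2 \<subseteq> E1" using assms f by (auto simp: sups_def inds_def)
  qed
  then show False using assms by simp
qed

lemma finite_inds: "finite (fst X) \<Longrightarrow> finite (inds j E X)"
proof -
  assume "finite (fst X)"
  then have "finite ({..<j} \<rightarrow>\<^sub>E fst X)" by (intro finite_PiE) auto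
  then show ?thesis by (rule rev_finite_subset) (auto simp: inds_def)
qed

lemma injs_card_split:
  assumes fin: "finite (fst X)" and E: "E \<subseteq> {..<j} \<times> {..<j}"
  shows "card (injs j E X) = card (inds j E X) + (\<Sum>E'\<in>sups j E - {E}. card (inds j E' X))"
proof -
  have "card (injs j E X) = (\<Sum>E'\<in>sups j E. card (inds j E' X))"
    unfolding injs_decomp[OF E]
    by (rule card_UN_disjoint) (simp add: finite_sups, simp add: finite_inds[OF fin],
        use inds_disj[where j=j and E=E and X=X] in blast)
  also have "\<dots> = card (inds j E X) + (\<Sum>E'\<in>sups j E - {E}. card (inds j E' X))"
    by (rule sum.remove[OF finite_sups]) (use E in \<open>auto simp: sups_def\<close>)
  finally show ?thesis .
qed

lemma inds_eq:
  assumes finG: "finite (fst G)" and finH: "finite (fst H)"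
    and inj: "\<forall>E. card (injs k E G) = card (injs k E H)"
  shows "E \<subseteq> {..<k} \<times> {..<k} \<Longrightarrow> card (inds k E G) = card (inds k E H)"
proof (induction "card ({..<k} \<times> {..<k} - E)" arbitrary: E rule: less_induct)
  case less
  have "(\<Sum>E'\<in>sups k E - {E}. card (inds k E' G)) = (\<Sum>E'\<in>sups k E - {E}. card (inds k E' H))"
  proof (rule sum.cong)
    fix E' assume E': "E' \<in> sups k E - {E}"
    then have sub: "E \<subset> E'" "E' \<subseteq> {..<k} \<times> {..<k}" by (auto simp: sups_def)
    have "card ({..<k} \<times> {..<k} - E') < card ({..<k} \<times> {..<k} - E)"
      by (rule psubset_card_mono) (use sub in auto)
    then show "card (inds k E' G) = card (inds k E' H)" using less sub by blast
  qed simp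
  then show ?case using injs_card_split[OF finG less.prems] injs_card_split[OF finH less.prems] inj by simp
qed

definition Ssets :: "nat \<Rightarrow> (nat set \<times> (nat \<times> nat) set) \<Rightarrow> 'a graph \<Rightarrow> 'a set set" where
  "Ssets k F X = {S. S \<subseteq> fst X \<and> card S = k \<and> graph_iso F (induced X S)}"

lemma fib_card:
  assumes S: "graph_iso ({..<k}, E) (induced X S)" and SX: "S \<subseteq> fst X"
  shows "card {f \<in> inds k E X. f ` {..<k} = S} = card (inds k E ({..<k}, E))"
proof -
  obtain h where h: "bij_betw h {..<k} S"
    and he: "\<forall>x\<in>{..<k}. \<forall>y\<in>{..<k}. (x,y) \<in> E \<longleftrightarrow> (h x, h y) \<in> snd X \<inter> S \<times> S"
    using S by (auto simp: graph_iso_def induced_def)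
  have hS: "h x \<in> S" if "x < k" for x using h that by (auto simp: bij_betw_def)
  have hinj: "inj_on h {..<k}" using h by (simp add: bij_betw_def)
  let ?T = "\<lambda>\<sigma>. \<lambda>x\<in>{..<k}. h (\<sigma> x)"
  have "bij_betw ?T (inds k E ({..<k}, E)) {f \<in> inds k E X. f ` {..<k} = S}"
  proof (rule bij_betw_imageI)
    show "inj_on ?T (inds k E ({..<k}, E))"
    proof (rule inj_onI)
      fix s1 s2 assume s1: "s1 \<in> inds k E ({..<k}, E)" and s2: "s2 \<in> inds k E ({..<k}, E)"
        and e: "?T s1 = ?T s2"
      show "s1 = s2"
      proof (rule ext)
        fix x show "s1 x = s2 x"
        proof (cases "x < k")
          case True
          then have "h (s1 x) = h (s2 x)" using e by (metis lessThan_iff restrict_apply')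
          moreover have "s1 x < k" "s2 x < k" using s1 s2 True by (auto simp: inds_def)
          ultimately show ?thesis using hinj by (auto simp: inj_on_def)
        next
          case False then show ?thesis using s1 s2 by (auto simp: inds_def PiE_def extensional_def)
        qed
      qed
    qed
  next
    show "?T ` inds k E ({..<k}, E) = {f \<in> inds k E X. f ` {..<k} = S}"
    proof
      show "?T ` inds k E ({..<k}, E) \<subseteq> {f \<in> inds k E X. f ` {..<k} = S}"
      proof
        fix f assume "f \<in> ?T ` inds k E ({..<k}, E)"
        then obtain s where s: "s \<in> inds k E ({..<k}, E)" and f: "f = ?T s" by blast
        have sk: "s x < k" if "x < k" for x using s that by (auto simp: inds_def)
        have sinj: "inj_on s {..<k}" using s by (simp add: inds_def)
        have se: "(x,y) \<in> E \<longleftrightarrow> (s x, s y) \<in> E" if "x < k" "y < k" for x y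
          using s that by (auto simp: inds_def)
        have simg: "s ` {..<k} = {..<k}"
          by (rule endo_inj_surj) (use sk sinj in auto)
        have "f \<in> inds k E X"
          unfolding inds_def f
        proof (intro CollectI conjI allI impI)
          show "?T s \<in> {..<k} \<rightarrow>\<^sub>E fst X" using hS sk SX by auto
          show "inj_on (?T s) {..<k}"
            using hinj sinj sk by (auto simp: inj_on_def)
        next
          fix x y assume x: "x < k" and y: "y < k"
          have "(x,y) \<in> E \<longleftrightarrow> (s x, s y) \<in> E" by (rule se[OF x y])
          also have "\<dots> \<longleftrightarrow> (h (s x), h (s y)) \<in> snd X \<inter> S \<times> S" using he sk x y by auto
          also have "\<dots> \<longleftrightarrow> (h (s x), h (s y)) \<in> snd X" using hS sk x y by auto
          finally show "(x,y) \<in> E \<longleftrightarrow> (?T s x, ?T s y) \<in> snd X" using x y by simp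
        qed
        moreover have "f ` {..<k} = S"
        proof -
          have "f ` {..<k} = h ` s ` {..<k}" unfolding f by (auto simp: image_def)
          also have "\<dots> = S" using simg h by (simp add: bij_betw_def)
          finally show ?thesis .
        qed
        ultimately show "f \<in> {f \<in> inds k E X. f ` {..<k} = S}" by blast
      qed
    next
      show "{f \<in> inds k E X. f ` {..<k} = S} \<subseteq> ?T ` inds k E ({..<k}, E)"
      proof
        fix f assume f: "f \<in> {f \<in> inds k E X. f ` {..<k} = S}"
        let ?g = "inv_into {..<k} h"
        define s where "s = (\<lambda>x\<in>{..<k}. ?g (f x))"
        have fS: "f x \<in> S" if "x < k" for x using f that by auto
        have gk: "?g u < k" if "u \<in> S" for u using h that
          by (metis bij_betw_def inv_into_into lessThan_iff)
        have hg: "h (?g u) = u" if "u \<in> S" for u using h that by (simp add: bij_betw_def f_inv_into_f)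
        have finj: "inj_on f {..<k}" using f by (simp add: inds_def)
        have fe: "(x,y) \<in> E \<longleftrightarrow> (f x, f y) \<in> snd X" if "x < k" "y < k" for x y
          using f that by (auto simp: inds_def)
        have sx: "h (s x) = f x" if "x < k" for x using hg fS that by (simp add: s_def)
        have "s \<in> inds k E ({..<k}, E)"
          unfolding inds_def
        proof (intro CollectI conjI allI impI)
          show "s \<in> {..<k} \<rightarrow>\<^sub>E fst ({..<k}, E)" using gk fS by (auto simp: s_def)
          show "inj_on s {..<k}"
          proof (rule inj_onI)
            fix x y assume "x \<in> {..<k}" "y \<in> {..<k}" "s x = s y"
            then have "f x = f y" using sx by (metis lessThan_iff)
            then show "x = y" using finj \<open>x \<in> {..<k}\<close> \<open>y \<in> {..<k}\<close> by (auto simp: inj_on_def)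
          qed
        next
          fix x y assume x: "x < k" and y: "y < k"
          have sk: "s x < k" "s y < k" using gk fS x y by (auto simp: s_def)
          have "(x,y) \<in> E \<longleftrightarrow> (f x, f y) \<in> snd X" by (rule fe[OF x y])
          also have "\<dots> \<longleftrightarrow> (h (s x), h (s y)) \<in> snd X" using sx x y by simp
          also have "\<dots> \<longleftrightarrow> (h (s x), h (s y)) \<in> snd X \<inter> S \<times> S" using hS sk by auto
          also have "\<dots> \<longleftrightarrow> (s x, s y) \<in> E" using he sk by auto
          finally show "(x,y) \<in> E \<longleftrightarrow> (s x, s y) \<in> snd ({..<k}, E)" by simp
        qed
        moreover have "f = ?T s"
        proof (rule ext)
          fix x show "f x = ?T s x"
            using sx f by (cases "x < k") (auto simp: inds_def PiE_def extensional_def)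
        qed
        ultimately show "f \<in> ?T ` inds k E ({..<k}, E)" by blast
      qed
    qed
  qed
  then show ?thesis by (simp add: bij_betw_same_card)
qed

lemma inds_count:
  assumes fin: "finite (fst X)"
  shows "card (inds k E X) = card (Ssets k ({..<k}, E) X) * card (inds k E ({..<k}, E))"
proof -
  let ?F = "({..<k}, E)"
  let ?fib = "\<lambda>S. {f \<in> inds k E X. f ` {..<k} = S}"
  have eq: "inds k E X = (\<Union>S\<in>Ssets k ?F X. ?fib S)"
  proof
    show "inds k E X \<subseteq> (\<Union>S\<in>Ssets k ?F X. ?fib S)"
    proof
      fix f assume f: "f \<in> inds k E X"
      let ?S = "f ` {..<k}"
      have fi: "inj_on f {..<k}" using f by (simp add: inds_def)
      have "?S \<subseteq> fst X" using f by (auto simp: inds_def)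
      moreover have "card ?S = k" using card_image[OF fi] by simp
      moreover have "graph_iso ?F (induced X ?S)"
      proof -
        have bj: "bij_betw f {..<k} ?S" using fi by (simp add: bij_betw_def)
        have fe: "\<forall>x\<in>{..<k}. \<forall>y\<in>{..<k}. (x,y) \<in> E \<longleftrightarrow> (f x, f y) \<in> snd X \<inter> ?S \<times> ?S"
          using f by (auto simp: inds_def)
        show ?thesis unfolding graph_iso_def induced_def fst_conv snd_conv using bj fe by blast
      qed
      ultimately have "?S \<in> Ssets k ?F X" by (simp add: Ssets_def)
      then show "f \<in> (\<Union>S\<in>Ssets k ?F X. ?fib S)" using f by blast
    qed
  qed blast
  have finS: "finite (Ssets k ?F X)"
    by (rule finite_subset[of _ "Pow (fst X)"]) (use fin in \<open>auto simp: Ssets_def\<close>)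
  have "card (inds k E X) = card (\<Union>S\<in>Ssets k ?F X. ?fib S)"
    by (rule arg_cong[OF eq])
  also have "\<dots> = (\<Sum>S\<in>Ssets k ?F X. card (?fib S))"
  proof (rule card_UN_disjoint)
    show "finite (Ssets k ?F X)" by (rule finS)
    show "\<forall>S\<in>Ssets k ?F X. finite (?fib S)" using finite_inds[OF fin] by simp
    show "\<forall>S\<in>Ssets k ?F X. \<forall>T\<in>Ssets k ?F X. S \<noteq> T \<longrightarrow> ?fib S \<inter> ?fib T = {}" by blast
  qed
  also have "\<dots> = (\<Sum>S\<in>Ssets k ?F X. card (inds k E ?F))"
  proof (rule sum.cong[OF refl])
    fix S assume "S \<in> Ssets k ?F X"
    then have "graph_iso ?F (induced X S)" "S \<subseteq> fst X" by (auto simp: Ssets_def)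
    then show "card (?fib S) = card (inds k E ?F)" by (rule fib_card)
  qed
  finally show ?thesis by simp
qed

lemma inds_self_pos: "0 < card (inds k E ({..<k}, E))"
proof -
  have "(\<lambda>x\<in>{..<k}. x) \<in> inds k E ({..<k}, E)" by (auto simp: inds_def inj_on_def)
  moreover have "finite (inds k E ({..<k}, E))" by (rule finite_inds) simp
  ultimately show ?thesis by (auto simp: card_gt_0_iff)
qed

lemma cls_iff:
  assumes "graph_iso (F :: nat graph) W"
  shows "iso_class Y = iso_class W \<longleftrightarrow> graph_iso F Y"
proof
  assume h: "iso_class Y = iso_class W"
  have "F \<in> iso_class W" using assms by (simp add: iso_class_def)
  then have "F \<in> iso_class Y" using h by simp
  then show "graph_iso F Y" by (simp add: iso_class_def)
next
  assume FY: "graph_iso F Y"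
  have "graph_iso N Y \<longleftrightarrow> graph_iso N W" for N :: "nat graph"
    using FY assms graph_iso_sym graph_iso_trans by metis
  then show "iso_class Y = iso_class W" by (simp add: iso_class_def)
qed

definition Sk :: "nat \<Rightarrow> 'a graph \<Rightarrow> 'a set set" where
  "Sk k X = {S. S \<subseteq> fst X \<and> card S = k}"

lemma count_deck:
  assumes fin: "finite (fst X)"
  shows "count (deck k X) c = card {S \<in> Sk k X. iso_class (induced X S) = c}"
proof -
  have finS: "finite (Sk k X)"
    by (rule finite_subset[of _ "Pow (fst X)"]) (use fin in \<open>auto simp: Sk_def\<close>)
  have d: "deck k X = image_mset (\<lambda>S. iso_class (induced X S)) (mset_set (Sk k X))"
    by (simp add: deck_def Sk_def)
  have "count (deck k X) c = sum (count (mset_set (Sk k X))) ((\<lambda>S. iso_class (induced X S)) -` {c} \<inter> Sk k X)"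
    unfolding d count_image_mset using finS by simp
  also have "\<dots> = sum (\<lambda>_. 1) ((\<lambda>S. iso_class (induced X S)) -` {c} \<inter> Sk k X)"
    by (rule sum.cong) (use finS in auto)
  also have "\<dots> = card {S \<in> Sk k X. iso_class (induced X S) = c}"
    by (simp add: Int_def conj_commute)
  finally show ?thesis .
qed

lemma deck_count_aux:
  fixes G :: "'a graph" and H :: "'b graph"
  assumes finG: "finite (fst G)" and finH: "finite (fst H)"
    and ind: "\<forall>E. E \<subseteq> {..<k} \<times> {..<k} \<longrightarrow> card (inds k E G) = card (inds k E H)"
    and S0: "S0 \<in> Sk k G" "iso_class (induced G S0) = c"
  shows "card {S \<in> Sk k G. iso_class (induced G S) = c} = card {S \<in> Sk k H. iso_class (induced H S) = c}"
proof -
  have S0f: "finite S0" "card S0 = k" using S0 finG by (auto simp: Sk_def intro: finite_subset)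
  obtain b where b: "bij_betw b {0..<card S0} S0" using ex_bij_betw_nat_finite[OF S0f(1)] by blast
  have b': "bij_betw b {..<k} S0" using b S0f by (simp add: atLeast0LessThan)
  define E where "E = {(x,y). x < k \<and> y < k \<and> (b x, b y) \<in> snd G}"
  let ?F = "({..<k}, E)"
  have bS: "b x \<in> S0" if "x < k" for x using b' that by (auto simp: bij_betw_def)
  have iso: "graph_iso ?F (induced G S0)"
    unfolding graph_iso_def induced_def using b' bS by (intro exI[of _ b]) (auto simp: E_def)
  have ciG: "(iso_class (induced G S) = c) = graph_iso ?F (induced G S)" for S
    unfolding S0(2)[symmetric] by (rule cls_iff[OF iso])
  have ciH: "(iso_class (induced H S) = c) = graph_iso ?F (induced H S)" for S
    unfolding S0(2)[symmetric] by (rule cls_iff[OF iso])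
  have EG: "{S \<in> Sk k G. iso_class (induced G S) = c} = Ssets k ?F G"
    by (simp only: ciG) (auto simp: Sk_def Ssets_def)
  have EH: "{S \<in> Sk k H. iso_class (induced H S) = c} = Ssets k ?F H"
    by (simp only: ciH) (auto simp: Sk_def Ssets_def)
  have "E \<subseteq> {..<k} \<times> {..<k}" by (auto simp: E_def)
  then have "card (inds k E G) = card (inds k E H)" using ind by blast
  then have "card (Ssets k ?F G) * card (inds k E ?F) = card (Ssets k ?F H) * card (inds k E ?F)"
    using inds_count[OF finG] inds_count[OF finH] by metis
  then have "card (Ssets k ?F G) = card (Ssets k ?F H)" using inds_self_pos[of k E] by simp
  then show ?thesis using EG EH by simp
qed

lemma deck_eq_from_inds:
  fixes G :: "'a graph" and H :: "'b graph"
  assumes finG: "finite (fst G)" and finH: "finite (fst H)"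
    and ind: "\<forall>E. E \<subseteq> {..<k} \<times> {..<k} \<longrightarrow> card (inds k E G) = card (inds k E H)"
  shows "deck k G = deck k H"
proof (rule multiset_eqI)
  fix c
  have ind': "\<forall>E. E \<subseteq> {..<k} \<times> {..<k} \<longrightarrow> card (inds k E H) = card (inds k E G)" using ind by simp
  have "card {S \<in> Sk k G. iso_class (induced G S) = c} = card {S \<in> Sk k H. iso_class (induced H S) = c}"
  proof (cases "\<exists>S0. S0 \<in> Sk k G \<and> iso_class (induced G S0) = c")
    case True
    then obtain S0 where "S0 \<in> Sk k G" "iso_class (induced G S0) = c" by blast
    then show ?thesis by (rule deck_count_aux[OF finG finH ind])
  next
    case False
    note F = False
    show ?thesis
    proof (cases "\<exists>T0. T0 \<in> Sk k H \<and> iso_class (induced H T0) = c")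
      case True
      then obtain T0 where T0: "T0 \<in> Sk k H" "iso_class (induced H T0) = c" by blast
      show ?thesis using deck_count_aux[OF finH finG ind' T0] by (rule sym)
    next
      case False
      have e1: "{S \<in> Sk k G. iso_class (induced G S) = c} = {}" using F by blast
      have e2: "{S \<in> Sk k H. iso_class (induced H S) = c} = {}" using False by blast
      show ?thesis unfolding e1 e2 by simp
    qed
  qed
  then show "count (deck k G) c = count (deck k H) c" by (simp add: count_deck[OF finG] count_deck[OF finH])
qed


theorem corollary3p4:
  fixes G :: "'a graph" and H :: "'b graph" and k n :: nat
  assumes "k > 0" and "n > 0"
    and "simple_graph G" and "simple_graph H"
    and "card (fst G) = n" and "card (fst H) = n"
    and "all_components_long_cycles k G" and "all_components_long_cycles k H"
  shows "deck k G = deck k H"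
proof -
  have finG: "finite (fst G)" and finH: "finite (fst H)"
    using assms(3,4) by (auto simp: simple_graph_def)
  obtain msG where gG: "good k msG" and iG: "graph_iso G (Std msG)"
    using normal_form[OF assms(3,7)] by blast
  obtain msH where gH: "good k msH" and iH: "graph_iso H (Std msH)"
    using normal_form[OF assms(4,8)] by blast
  have cG: "card (SV msG) = n"
  proof -
    obtain f where "bij_betw f (fst G) (fst (Std msG))" using iG by (auto simp: graph_iso_def)
    then have "card (fst G) = card (SV msG)" by (simp add: bij_betw_same_card Std_def)
    then show ?thesis using assms(5) by simp
  qed
  have cH: "card (SV msH) = n"
  proof -
    obtain f where "bij_betw f (fst H) (fst (Std msH))" using iH by (auto simp: graph_iso_def)
    then have "card (fst H) = card (SV msH)" by (simp add: bij_betw_same_card Std_def)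
    then show ?thesis using assms(6) by simp
  qed
  have finS: "finite (fst (Std ms))" for ms by (simp add: Std_def finite_SV)
  have hom: "\<forall>j\<le>k. \<forall>E. card (homs j E G) = card (homs j E H)"
  proof (intro allI impI)
    fix j E assume jk: "j \<le> k"
    have "card (homs j E G) = card (homs j E (Std msG))" by (rule homs_iso_eq[OF iG finS finG])
    also have "\<dots> = card (homs j E (Std msH))"
      using Std_card_le[OF gG gH jk, of E] Std_card_le[OF gH gG jk, of E] cG cH by simp
    also have "\<dots> = card (homs j E H)" by (rule homs_iso_eq[OF iH finS finH, symmetric])
    finally show "card (homs j E G) = card (homs j E H)" .
  qed
  have inj: "\<forall>E. card (injs k E G) = card (injs k E H)"
    using injs_eq[OF finG finH hom] by simp
  have ind: "\<forall>E. E \<subseteq> {..<k} \<times> {..<k} \<longrightarrow> card (inds k E G) = card (inds k E H)"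
    using inds_eq[OF finG finH inj] by blast
  show ?thesis by (rule deck_eq_from_inds[OF finG finH ind])
qed

end
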